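(* Let $\mathfrak m,\mathfrak n\in\mathbb R^{+}$ with $\mathfrak m<\mathfrak n$, $\Omega=[\mathfrak m,\mathfrak n]$, $\sigma>0$, $\varrho>0$, $0<\kappa<\mu\le1$, and let $\Phi\colon\Omega\to\mathbb R$ be an increasing differentiable function with $\Phi'(\ell)\ne0$ on $\Omega$. Let $\alpha\in C([\mathfrak m-\sigma,\mathfrak m],\mathbb R)$. Assume: (H1) $\mathfrak f\colon\Omega\to[\mathfrak m-\sigma,\mathfrak n]$ is continuous with $\mathfrak f(\ell)\le\ell$ for all $\ell\in\Omega$; (H2) $\mathbb Q\colon\Omega\times\mathbb R^2\to\mathbb R$ is continuous and there exists $\mathbb L_{\mathbb Q}>0$ such that $|\mathbb Q(\ell,\mathfrak b_2,\mathfrak a_2)-\mathbb Q(\ell,\mathfrak b_1,\mathfrak a_1)|\le\mathbb L_{\mathbb Q}(|\mathfrak b_2-\mathfrak b_1|+|\mathfrak a_2-\mathfrak a_1|)$ for all $\ell\in\Omega$ and $\mathfrak a_1,\mathfrak a_2,\mathfrak b_1,\mathfrak b_2\in\mathbb R$. Then the problem $$ \begin{cases} {^{c}\mathbb{D}}_{\mathfrak m^{+}}^{\mu;\Phi}\mathfrak z(\ell)+\varrho\,{^{c}\mathbb{D}}_{\mathfrak m^{+}}^{\kappa;\Phi}\mathfrak z(\ell)=\mathbb Q\bigl(\ell,\mathfrak z(\ell),\mathfrak z(\mathfrak f(\ell))\bigr), & \ell\in\Omega,\\ \mathfrak z(\ell)=\alpha(\ell), & \ell\in[\mathfrak m-\sigma,\mathfrak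 m], \end{cases} $$ possesses a unique solution belonging to $C([\mathfrak m-\sigma,\mathfrak n],\mathbb R)\cap C([\mathfrak m,\mathfrak n],\mathbb R)$.
   Context: Mittag-Leffler functions: $\mathbb M_{p}(\vartheta)=\sum_{k\ge0}\frac{\vartheta^k}{\Gamma(pk+1)}$, $\mathbb M_{p,q}(\vartheta)=\sum_{k\ge0}\frac{\vartheta^k}{\Gamma(pk+q)}$. The $\Phi$-Riemann–Liouville integral of order $\gamma>0$: $\mathbb I_{\mathfrak m^+}^{\gamma;\Phi}\mathfrak z(\ell)=\frac{1}{\Gamma(\gamma)}\int_{\mathfrak m}^{\ell}\Phi'(\eta)(\Phi(\ell)-\Phi(\eta))^{\gamma-1}\mathfrak z(\eta)\,\mathrm d\eta$. For $0<\gamma<1$, the $\Phi$-Caputo derivative is ${^{c}\mathbb D}_{\mathfrak m^+}^{\gamma;\Phi}\mathfrak z=\mathbb I_{\mathfrak m^+}^{1-\gamma;\Phi}(\mathfrak z'/\Phi')$, and for $\gamma=1$ it is $\mathfrak z'/\Phi'$. A solution of the problem is understood as a function $\mathfrak z\in C([\mathfrak m-\sigma,\mathfrak n],\mathbb R)$ with $\mathfrak z=\alpha$ on $[\mathfrak m-\sigma,\mathfrak m]$ and $\mathfrak z(\ell)=\alpha(\mathfrak m)+\int_{\mathfrak m}^{\ell}\Phi'(\eta)(\Phi(\ell)-\Phi(\eta))^{\mu-1}\mathbb M_{\mu-\kappa,\mu}(-\varrho(\Phi(\ell)-\Phi(\eta))^{\mu-\kappa})\mathbb Q(\eta,\mathfrak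 z(\eta),\mathfrak z(\mathfrak f(\eta)))\,\mathrm d\eta$ for $\ell\in\Omega$ (the paper shows the problem is equivalent to this integral equation). *)

theory Defs
  imports "HOL-Analysis.Analysis"
begin

definition ML2 :: "real \<Rightarrow> real \<Rightarrow> real \<Rightarrow> real" where
  "ML2 p q x = (\<Sum>k. x ^ k / Gamma (p * real k + q))"

text \<open>Solution of the delay problem in the sense of the equivalent integral equation.
  Phi' is the derivative of Phi on the interval.\<close>
definition is_solution ::
  "real \<Rightarrow> real \<Rightarrow> real \<Rightarrow> real \<Rightarrow> real \<Rightarrow> real \<Rightarrow> (real \<Rightarrow> real) \<Rightarrow> (real \<Rightarrow> real)
   \<Rightarrow> (real \<Rightarrow> real) \<Rightarrow> (real \<Rightarrow> real) \<Rightarrow> (real \<Rightarrow> real \<Rightarrow> real \<Rightarrow> real)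
   \<Rightarrow> (real \<Rightarrow> real) \<Rightarrow> bool" where
  "is_solution m n \<sigma> \<mu> \<kappa> \<rho> \<Phi> \<Phi>' \<alpha> f Q z \<longleftrightarrow>
     continuous_on {m - \<sigma>..n} z \<and> continuous_on {m..n} z \<and>
     (\<forall>l\<in>{m - \<sigma>..m}. z l = \<alpha> l) \<and>
     (\<forall>l\<in>{m..n}.
        ((\<lambda>\<eta>. \<Phi>' \<eta> * (\<Phi> l - \<Phi> \<eta>) powr (\<mu> - 1)
              * ML2 (\<mu> - \<kappa>) \<mu> (- \<rho> * (\<Phi> l - \<Phi> \<eta>) powr (\<mu> - \<kappa>))
              * Q \<eta> (z \<eta>) (z (f \<eta>)))
          has_integral (z l - \<alpha> m)) {m..l})"

end

theory Submission
  imports Defs "HOL-Analysis.Analysis"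
begin

lemma Gamma_ge_fact:
  fixes x :: real assumes "x \<ge> 2"
  shows "Gamma x \<ge> fact (nat \<lfloor>x\<rfloor> - 1)"
proof -
  define N where "N = nat \<lfloor>x\<rfloor>"
  have N2: "N \<ge> 2" using assms unfolding N_def by linarith
  have "real N \<le> x" unfolding N_def using assms by linarith
  have "Gamma (real N) \<le> Gamma x"
  proof (cases "real N = x")
    case False thus ?thesis using \<open>real N \<le> x\<close> N2 by (intro less_imp_le Gamma_real_strict_mono) auto
  qed auto
  moreover have "Gamma (real N) = fact (N - 1)"
    using N2 Gamma_fact[of "N - 1"] by (simp add: of_nat_diff Suc_diff_1)
  ultimately show ?thesis unfolding N_def by simp
qed

lemma pow_div_fact_le_exp:
  fixes B :: real assumes "B \<ge> 0" shows "B ^ j / fact j \<le> exp B"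
proof -
  have s: "summable (\<lambda>n. B ^ n / fact n)" using summable_exp[of B] by (simp add: divide_inverse mult.commute)
  have "sum (\<lambda>n. B ^ n / fact n) {j} \<le> (\<Sum>n. B ^ n / fact n)"
    by (rule sum_le_suminf[OF s]) (use assms in auto)
  also have "\<dots> = exp B" by (simp add: exp_def field_simps)
  finally show ?thesis by simp
qed

lemma ML2_summable:
  fixes p q K :: real assumes p: "p > 0" and q: "q > 0" and K: "K \<ge> 0"
  shows "summable (\<lambda>k. K ^ k / Gamma (p * real k + q))"
proof -
  define B where "B = (2*K+1) powr (1/p)"
  have B1: "B \<ge> 1" unfolding B_def using K p by (simp add: ge_one_powr_ge_zero)
  have Bp: "B powr p = 2*K+1" unfolding B_def using K p by (simp add: powr_powr)
  define r where "r = K / (2*K+1)"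
  have r: "0 \<le> r" "r < 1" unfolding r_def using K by auto
  have g: "summable (\<lambda>k. exp B * B^2 * r ^ k)"
    by (rule summable_mult) (use r in \<open>simp add: summable_geometric\<close>)
  show ?thesis
  proof (rule summable_comparison_test'[OF g])
    fix k :: nat assume k: "k \<ge> nat \<lceil>2/p\<rceil>"
    have "real k \<ge> 2/p" using k by linarith
    hence pk: "p * real k \<ge> 2" using p by (simp add: field_simps)
    define x where "x = p * real k + q"
    have x2: "x \<ge> 2" using pk q unfolding x_def by linarith
    define J where "J = nat \<lfloor>x\<rfloor> - 1"
    have GJ: "Gamma x \<ge> fact J" unfolding J_def by (rule Gamma_ge_fact[OF x2])
    have Jx: "real J \<ge> p * real k - 2" unfolding J_def x_def using x2 q unfolding x_def by linarith
    have fJ: "1 / fact J \<le> exp B / B ^ J"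
      using pow_div_fact_le_exp[of B J] B1 by (simp add: field_simps)
    have "B ^ J = B powr real J" using B1 by (simp add: powr_realpow)
    also have "\<dots> \<ge> B powr (p * real k - 2)" using B1 Jx by (simp add: powr_mono)
    hence "B ^ J \<ge> B powr (p * real k - 2)" using calculation by simp
    moreover have "B powr (p * real k - 2) = (2*K+1) ^ k / B^2"
    proof -
      have "B powr (p * real k - 2) = B powr (p * real k) / B powr 2" by (rule powr_diff)
      also have "B powr (p * real k) = (B powr p) powr real k" by (simp add: powr_powr)
      also have "\<dots> = (2*K+1) ^ k" using Bp K by (simp add: powr_realpow)
      also have "B powr 2 = B^2" using B1 by (simp add: powr_realpow)
      finally show ?thesis .
    qed
    ultimately have BJ: "B ^ J \<ge> (2*K+1) ^ k / B^2" by simp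
    have "norm (K ^ k / Gamma x) = K ^ k / Gamma x" using K x2 by simp
    also have "\<dots> \<le> K ^ k / fact J" using GJ K by (intro divide_left_mono) (auto intro!: mult_pos_pos simp: fact_gt_zero order_less_le_trans[OF fact_gt_zero])
    also have "\<dots> \<le> K ^ k * (exp B / B ^ J)" using fJ K by (simp add: divide_inverse mult_left_mono)
    also have "\<dots> \<le> K ^ k * (exp B / ((2*K+1) ^ k / B^2))"
      using BJ K B1 by (intro mult_left_mono divide_left_mono) auto
    also have "\<dots> = exp B * B^2 * r ^ k" unfolding r_def using K by (simp add: power_divide field_simps)
    finally show "norm (K ^ k / Gamma (p * real k + q)) \<le> exp B * B^2 * r ^ k" unfolding x_def .
  qed
qed

lemma ML2_isCont:
  fixes p q :: real assumes p: "p > 0" and q: "q > 0"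
  shows "isCont (ML2 p q) x"
proof -
  have eq: "ML2 p q = (\<lambda>x. \<Sum>k. inverse (Gamma (p * real k + q)) * x ^ k)"
    by (rule ext) (simp add: ML2_def divide_inverse mult.commute)
  have "summable (\<lambda>k. inverse (Gamma (p * real k + q)) * (\<bar>x\<bar> + 1) ^ k)"
    using ML2_summable[OF p q, of "\<bar>x\<bar>+1"] by (simp add: divide_inverse mult.commute)
  then show ?thesis unfolding eq by (rule isCont_powser) simp
qed

lemma ML2_cont: "p > 0 \<Longrightarrow> q > 0 \<Longrightarrow> continuous_on S (ML2 p q)"
  by (intro continuous_at_imp_continuous_on ballI ML2_isCont)

lemma integrable_nonneg_times_cont:
  fixes k0 h :: "real \<Rightarrow> real"
  assumes k0: "k0 integrable_on {a..b}" "\<And>x. x \<in> {a..b} \<Longrightarrow> 0 \<le> k0 x"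
    and h: "continuous_on {a..b} h"
  shows "(\<lambda>x. k0 x * h x) absolutely_integrable_on {a..b}"
proof -
  have "(\<lambda>x. h x * k0 x) absolutely_integrable_on {a..b}"
  proof (rule absolutely_integrable_bounded_measurable_product_real)
    show "h \<in> borel_measurable (lebesgue_on {a..b})"
      using h by (rule continuous_imp_measurable_on_sets_lebesgue) auto
    show "bounded (h ` {a..b})" using h by (intro compact_imp_bounded compact_continuous_image) auto
    show "k0 absolutely_integrable_on {a..b}" using k0 by (rule nonnegative_absolutely_integrable_1)
  qed auto
  thus ?thesis by (simp add: mult.commute)
qed

locale kern =
  fixes m n :: real and \<Phi> \<Phi>' :: "real \<Rightarrow> real"
  assumes mn: "m < n" and mono: "mono_on {m..n} \<Phi>"
    and der: "\<And>l. l \<in> {m..n} \<Longrightarrow> (\<Phi> has_real_derivative \<Phi>' l) (at l within {m..n})"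
    and nz: "\<And>l. l \<in> {m..n} \<Longrightarrow> \<Phi>' l \<noteq> 0"
begin

lemma Phi_cont: "continuous_on {m..n} \<Phi>"
  using der DERIV_continuous continuous_on_eq_continuous_within by blast

lemma der_at: "l \<in> {m<..<n} \<Longrightarrow> (\<Phi> has_real_derivative \<Phi>' l) (at l)"
  using der[of l] at_within_interior[of l "{m..n}"] by auto

lemma Phi_le: "x \<in> {m..n} \<Longrightarrow> y \<in> {m..n} \<Longrightarrow> x \<le> y \<Longrightarrow> \<Phi> x \<le> \<Phi> y"
  using mono by (simp add: mono_on_def)

lemma Phi_strict: assumes "x \<in> {m..n}" "y \<in> {m..n}" "x < y" shows "\<Phi> x < \<Phi> y"
proof (rule ccontr)
  assume "\<not> \<Phi> x < \<Phi> y"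
  hence eq: "\<Phi> x = \<Phi> y" using Phi_le assms by force
  define t where "t = (x + y) / 2"
  have t: "t \<in> {m<..<n}" using assms unfolding t_def by auto
  have "\<Phi>' t = 0"
  proof (rule DERIV_local_const[OF der_at[OF t]])
    show "0 < (y - x) / 2" using assms by simp
    show "\<forall>s. \<bar>t - s\<bar> < (y - x) / 2 \<longrightarrow> \<Phi> t = \<Phi> s"
    proof (intro allI impI)
      fix s assume s: "\<bar>t - s\<bar> < (y - x) / 2"
      have xs: "x \<le> s" "s \<le> y" using s unfolding t_def by (simp_all add: abs_less_iff field_simps)
      have "\<Phi> x \<le> \<Phi> s" "\<Phi> s \<le> \<Phi> y" "\<Phi> x \<le> \<Phi> t" "\<Phi> t \<le> \<Phi> y"
        using xs assms unfolding t_def by (auto intro!: Phi_le)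
      thus "\<Phi> t = \<Phi> s" using eq by linarith
    qed
  qed
  thus False using nz t by auto
qed

lemma Phi'_nonneg: assumes l: "l \<in> {m..n}" shows "\<Phi>' l \<ge> 0"
proof -
  have lim: "((\<lambda>y. (\<Phi> y - \<Phi> l) / (y - l)) \<longlongrightarrow> \<Phi>' l) (at l within {m..n})"
    using der[OF l] by (simp add: has_field_derivative_iff)
  show ?thesis
  proof (rule tendsto_lowerbound[OF lim])
    show "\<forall>\<^sub>F y in at l within {m..n}. 0 \<le> (\<Phi> y - \<Phi> l) / (y - l)"
      unfolding eventually_at_filter
    proof (intro always_eventually allI impI)
      fix y assume y: "y \<noteq> l" "y \<in> {m..n}"
      show "0 \<le> (\<Phi> y - \<Phi> l) / (y - l)"
      proof (cases "y < l")
        case True thus ?thesis using Phi_le[OF y(2) l] by (simp add: divide_nonpos_neg)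
      next
        case False thus ?thesis using Phi_le[OF l y(2)] y by simp
      qed
    qed
    show "at l within {m..n} \<noteq> bot"
      using l mn by (metis atLeastAtMost_iff at_within_Icc_at at_within_Icc_at_left
    at_within_Icc_at_right nless_le trivial_limit_at
    trivial_limit_at_left_real trivial_limit_at_right_real)
  qed
qed

lemma kern_int:
  assumes g: "\<gamma> > 0" and l: "l \<in> {m..n}" and c: "c \<in> {m..l}"
  shows "((\<lambda>\<eta>. \<Phi>' \<eta> * (\<Phi> l - \<Phi> \<eta>) powr (\<gamma> - 1)) has_integral (\<Phi> l - \<Phi> c) powr \<gamma> / \<gamma>) {c..l}"
proof -
  define F where "F = (\<lambda>\<eta>. - ((\<Phi> l - \<Phi> \<eta>) powr \<gamma> / \<gamma>))"
  have sub: "{c..l} \<subseteq> {m..n}" using c l by auto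
  have "((\<lambda>\<eta>. \<Phi>' \<eta> * (\<Phi> l - \<Phi> \<eta>) powr (\<gamma> - 1)) has_integral (F l - F c)) {c..l}"
  proof (rule fundamental_theorem_of_calculus_interior)
    show "c \<le> l" using c by simp
    show "continuous_on {c..l} F" unfolding F_def
      using sub g l
      by (intro continuous_intros continuous_on_powr' continuous_on_subset[OF Phi_cont sub])
         (auto intro!: Phi_le)
    fix x assume x: "x \<in> {c<..<l}"
    have xi: "x \<in> {m<..<n}" using x c l by auto
    have pos: "\<Phi> l - \<Phi> x > 0" using Phi_strict[of x l] x c l by auto
    have "(F has_real_derivative \<Phi>' x * (\<Phi> l - \<Phi> x) powr (\<gamma> - 1)) (at x)"
      unfolding F_def using g pos
      by (auto intro!: derivative_eq_intros der_at[OF xi] simp: field_simps)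
    thus "(F has_vector_derivative \<Phi>' x * (\<Phi> l - \<Phi> x) powr (\<gamma> - 1)) (at x)"
      by (simp add: has_real_derivative_iff_has_vector_derivative)
  qed
  also have "F l - F c = (\<Phi> l - \<Phi> c) powr \<gamma> / \<gamma>" unfolding F_def using g by simp
  finally show ?thesis .
qed

lemma kern_nonneg: "\<eta> \<in> {m..l} \<Longrightarrow> l \<le> n \<Longrightarrow> 0 \<le> \<Phi>' \<eta> * (\<Phi> l - \<Phi> \<eta>) powr (\<gamma> - 1)"
  using Phi'_nonneg[of \<eta>] by auto

end

locale prob = kern +
  fixes \<mu> \<kappa> \<rho> :: real
  assumes k0: "0 < \<kappa>" and k1: "\<kappa> < \<mu>" and mu1: "\<mu> \<le> 1" and rho: "0 < \<rho>"
begin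

definition "E s = ML2 (\<mu> - \<kappa>) \<mu> (- \<rho> * s powr (\<mu> - \<kappa>))"
definition "T0 = \<Phi> n - \<Phi> m"
definition "kk l \<eta> = \<Phi>' \<eta> * (\<Phi> l - \<Phi> \<eta>) powr (\<mu> - 1)"

lemma mu0: "\<mu> > 0" using k0 k1 by simp

lemma E_cont: "continuous_on {0..} E"
proof -
  have a: "continuous_on {0..} (\<lambda>s. - \<rho> * s powr (\<mu> - \<kappa>))"
    using k1 by (intro continuous_intros continuous_on_powr') auto
  have b: "continuous_on UNIV (ML2 (\<mu> - \<kappa>) \<mu>)" using k1 mu0 by (intro ML2_cont) auto
  show ?thesis unfolding E_def using continuous_on_compose2[OF b a] by auto
qed

lemma E_bound: "\<exists>M>0. \<forall>s\<in>{0..T0}. \<bar>E s\<bar> \<le> M"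
proof -
  have "compact (E ` {0..T0})"
    using E_cont by (intro compact_continuous_image continuous_on_subset[OF E_cont]) auto
  then obtain M where "M > 0" "\<forall>x\<in>E ` {0..T0}. norm x \<le> M"
    using compact_imp_bounded bounded_pos by metis
  thus ?thesis by auto
qed

lemma Phi_range: "l \<in> {m..n} \<Longrightarrow> \<eta> \<in> {m..l} \<Longrightarrow> \<Phi> l - \<Phi> \<eta> \<in> {0..T0}"
  unfolding T0_def using Phi_le[of \<eta> l] Phi_le[of m \<eta>] Phi_le[of l n] by auto

lemma kk_nonneg: "l \<in> {m..n} \<Longrightarrow> \<eta> \<in> {m..l} \<Longrightarrow> 0 \<le> kk l \<eta>"
  unfolding kk_def using Phi'_nonneg[of \<eta>] by auto

lemma kk_int: "\<gamma> > 0 \<Longrightarrow> l \<in> {m..n} \<Longrightarrow> c \<in> {m..l} \<Longrightarrow>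
   ((\<lambda>\<eta>. \<Phi>' \<eta> * (\<Phi> l - \<Phi> \<eta>) powr (\<gamma> - 1)) has_integral (\<Phi> l - \<Phi> c) powr \<gamma> / \<gamma>) {c..l}"
  by (rule kern_int)

lemma kk_has_int: "l \<in> {m..n} \<Longrightarrow> c \<in> {m..l} \<Longrightarrow> (kk l has_integral (\<Phi> l - \<Phi> c) powr \<mu> / \<mu>) {c..l}"
  unfolding kk_def using kern_int[OF mu0] by blast

lemma prod_int:
  assumes l: "l \<in> {m..n}" and c: "c \<in> {m..l}" and g: "continuous_on {c..l} g"
  shows "(\<lambda>\<eta>. kk l \<eta> * g \<eta>) absolutely_integrable_on {c..l}"
  using kk_has_int[OF l c] kk_nonneg[OF l] c g
  by (intro integrable_nonneg_times_cont) auto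

lemma Ecomp_cont: "l \<in> {m..n} \<Longrightarrow> continuous_on {m..l} (\<lambda>\<eta>. E (\<Phi> l - \<Phi> \<eta>))"
  apply (rule continuous_on_compose2[OF E_cont])
  using Phi_cont apply (auto intro!: continuous_intros intro: continuous_on_subset)[1]
  using Phi_le by auto

lemma prod_int_E:
  assumes l: "l \<in> {m..n}" and c: "c \<in> {m..l}" and g: "continuous_on {c..l} g"
  shows "(\<lambda>\<eta>. kk l \<eta> * E (\<Phi> l - \<Phi> \<eta>) * g \<eta>) absolutely_integrable_on {c..l}"
proof -
  have "continuous_on {c..l} (\<lambda>\<eta>. E (\<Phi> l - \<Phi> \<eta>) * g \<eta>)"
    using c by (intro continuous_intros g continuous_on_subset[OF Ecomp_cont[OF l]]) auto
  from prod_int[OF l c this] show ?thesis by (simp add: mult.assoc)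
qed

lemma prod_bound:
  assumes l: "l \<in> {m..n}" and c: "c \<in> {m..l}" and h: "continuous_on {c..l} h"
    and B: "\<And>\<eta>. \<eta> \<in> {c..l} \<Longrightarrow> \<bar>h \<eta>\<bar> \<le> B"
  shows "\<bar>integral {c..l} (\<lambda>\<eta>. kk l \<eta> * h \<eta>)\<bar> \<le> B * ((\<Phi> l - \<Phi> c) powr \<mu> / \<mu>)"
proof -
  have "norm (integral {c..l} (\<lambda>\<eta>. kk l \<eta> * h \<eta>)) \<le> integral {c..l} (\<lambda>\<eta>. kk l \<eta> * B)"
  proof (rule integral_norm_bound_integral)
    show "(\<lambda>\<eta>. kk l \<eta> * h \<eta>) integrable_on {c..l}"
      using prod_int[OF l c h] by (simp add: absolutely_integrable_on_def)
    show "(\<lambda>\<eta>. kk l \<eta> * B) integrable_on {c..l}"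
      using has_integral_mult_left[OF kk_has_int[OF l c]] by blast
    fix \<eta> assume e: "\<eta> \<in> {c..l}"
    have "0 \<le> kk l \<eta>" using kk_nonneg[OF l] e c by auto
    thus "norm (kk l \<eta> * h \<eta>) \<le> kk l \<eta> * B" using B[OF e] by (simp add: abs_mult mult_left_mono)
  qed
  also have "integral {c..l} (\<lambda>\<eta>. kk l \<eta> * B) = (\<Phi> l - \<Phi> c) powr \<mu> / \<mu> * B"
    using has_integral_mult_left[OF kk_has_int[OF l c]] by (rule integral_unique)
  finally show ?thesis by (simp add: mult.commute)
qed

end

context prob begin

definition "I g l = integral {m..l} (\<lambda>\<eta>. kk l \<eta> * E (\<Phi> l - \<Phi> \<eta>) * g \<eta>)"

lemma est:
  assumes l1: "l1 \<in> {m..n}" and l2: "l2 \<in> {m..n}" and le: "l1 \<le> l2"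
    and g: "continuous_on {m..n} g" and G: "\<And>\<eta>. \<eta> \<in> {m..n} \<Longrightarrow> \<bar>g \<eta>\<bar> \<le> G"
    and M: "\<And>s. s \<in> {0..T0} \<Longrightarrow> \<bar>E s\<bar> \<le> M"
    and om: "\<And>s1 s2. s1 \<in> {0..T0} \<Longrightarrow> s2 \<in> {0..T0} \<Longrightarrow> \<bar>s2 - s1\<bar> \<le> \<Phi> l2 - \<Phi> l1 \<Longrightarrow> \<bar>E s2 - E s1\<bar> \<le> \<omega>"
  shows "\<bar>I g l2 - I g l1\<bar> \<le> 2 * (G * M * ((\<Phi> l2 - \<Phi> l1) powr \<mu> / \<mu>)) + G * \<omega> * (T0 powr \<mu> / \<mu>)"
proof -
  define h where "h = \<Phi> l2 - \<Phi> l1"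
  define A1 where "A1 = (\<lambda>\<eta>. kk l1 \<eta> * E (\<Phi> l1 - \<Phi> \<eta>) * g \<eta>)"
  define A2 where "A2 = (\<lambda>\<eta>. kk l2 \<eta> * E (\<Phi> l2 - \<Phi> \<eta>) * g \<eta>)"
  define P1 where "P1 = (\<lambda>\<eta>. (\<Phi> l1 - \<Phi> \<eta>) powr (\<mu> - 1))"
  define P2 where "P2 = (\<lambda>\<eta>. (\<Phi> l2 - \<Phi> \<eta>) powr (\<mu> - 1))"
  have ml1: "m \<le> l1" and l1n: "l1 \<le> n" using l1 by auto
  have h0: "0 \<le> h" unfolding h_def using Phi_le l1 l2 le by auto
  have G0: "0 \<le> G" using G[of m] mn by (auto intro: order_trans[OF abs_ge_zero])
  have M0: "0 \<le> M" using M[of 0] unfolding T0_def using Phi_le[of m n] mn by (auto intro: order_trans[OF abs_ge_zero])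
  have gsub: "continuous_on {c..d} g" if "m \<le> c" "d \<le> n" for c d
    using that by (intro continuous_on_subset[OF g]) auto
  have A2int: "A2 integrable_on {m..l2}" unfolding A2_def
    using prod_int_E[OF l2, of m g] gsub[of m l2] l2 by (auto simp: absolutely_integrable_on_def)
  have A2int1: "A2 integrable_on {m..l1}" using integrable_subinterval_real[OF A2int] le by auto
  have A1int: "A1 integrable_on {m..l1}" unfolding A1_def
    using prod_int_E[OF l1, of m g] gsub[of m l1] l1 by (auto simp: absolutely_integrable_on_def)
  have split: "I g l2 = integral {m..l1} A2 + integral {l1..l2} A2"
    unfolding I_def A2_def[symmetric] using Henstock_Kurzweil_Integration.integral_combine[OF ml1 le A2int] by simp
  have t1: "\<bar>integral {l1..l2} A2\<bar> \<le> (M * G) * (h powr \<mu> / \<mu>)"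
  proof -
    have "\<bar>integral {l1..l2} (\<lambda>\<eta>. kk l2 \<eta> * (E (\<Phi> l2 - \<Phi> \<eta>) * g \<eta>))\<bar> \<le> (M * G) * ((\<Phi> l2 - \<Phi> l1) powr \<mu> / \<mu>)"
    proof (rule prod_bound[OF l2])
      show "l1 \<in> {m..l2}" using l1 le by auto
      show "continuous_on {l1..l2} (\<lambda>\<eta>. E (\<Phi> l2 - \<Phi> \<eta>) * g \<eta>)"
        using l1 l2 by (intro continuous_intros gsub continuous_on_subset[OF Ecomp_cont[OF l2]]) auto
      fix \<eta> assume e: "\<eta> \<in> {l1..l2}"
      have "\<bar>E (\<Phi> l2 - \<Phi> \<eta>)\<bar> \<le> M" using M Phi_range[OF l2] e l1 by auto
      moreover have "\<bar>g \<eta>\<bar> \<le> G" using G e l1 l2 by auto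
      ultimately show "\<bar>E (\<Phi> l2 - \<Phi> \<eta>) * g \<eta>\<bar> \<le> M * G" by (simp add: abs_mult mult_mono M0)
    qed
    thus ?thesis unfolding A2_def h_def by (simp add: mult.assoc)
  qed
  have diff: "integral {m..l1} A2 - I g l1 = integral {m..l1} (\<lambda>\<eta>. A2 \<eta> - A1 \<eta>)"
    unfolding I_def A1_def[symmetric] using integral_diff[OF A2int1 A1int] by simp
  have K1: "(kk l1 has_integral (\<Phi> l1 - \<Phi> m) powr \<mu> / \<mu>) {m..l1}" using kk_has_int[OF l1] ml1 by auto
  define W where "W = (\<Phi> l2 - \<Phi> m) powr \<mu> / \<mu> - h powr \<mu> / \<mu>"
  have K2: "(kk l2 has_integral W) {m..l1}"
  proof -
    have "kk l2 integrable_on {m..l1}"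
      using integrable_subinterval_real[OF has_integral_integrable[OF kk_has_int[OF l2, of m]]] l2 le ml1 by auto
    then obtain v where v: "(kk l2 has_integral v) {m..l1}" by blast
    have "(kk l2 has_integral h powr \<mu> / \<mu>) {l1..l2}" unfolding h_def using kk_has_int[OF l2] l1 le by auto
    from has_integral_combine[OF ml1 le v this] have "(kk l2 has_integral v + h powr \<mu> / \<mu>) {m..l2}" .
    with kk_has_int[OF l2, of m] l2 have "v + h powr \<mu> / \<mu> = (\<Phi> l2 - \<Phi> m) powr \<mu> / \<mu>"
      using has_integral_unique by auto
    with v show ?thesis unfolding W_def by (smt (verit))
  qed
  define V where "V = (\<Phi> l1 - \<Phi> m) powr \<mu> / \<mu> - W"
  have K3: "((\<lambda>\<eta>. \<Phi>' \<eta> * \<bar>P1 \<eta> - P2 \<eta>\<bar>) has_integral V) {m..l1}"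
  proof -
    have "((\<lambda>\<eta>. kk l1 \<eta> - kk l2 \<eta>) has_integral V) {m..l1}" unfolding V_def
      by (rule has_integral_diff[OF K1 K2])
    moreover have "kk l1 \<eta> - kk l2 \<eta> = \<Phi>' \<eta> * \<bar>P1 \<eta> - P2 \<eta>\<bar>" if e: "\<eta> \<in> {m..l1} - {l1}" for \<eta>
    proof -
      have pos: "0 < \<Phi> l1 - \<Phi> \<eta>" using Phi_strict[of \<eta> l1] e l1 by auto
      have "\<Phi> l1 - \<Phi> \<eta> \<le> \<Phi> l2 - \<Phi> \<eta>" using Phi_le[of l1 l2] l1 l2 le by auto
      hence "P2 \<eta> \<le> P1 \<eta>" unfolding P1_def P2_def using pos mu1 by (intro powr_mono2') auto
      thus ?thesis unfolding kk_def P1_def P2_def by (simp add: algebra_simps)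
    qed
    ultimately show ?thesis
      by (subst has_integral_spike_finite_eq[of "{l1}"]) auto
  qed
  define b where "b = (\<lambda>\<eta>. G * \<omega> * kk l2 \<eta> + G * M * (\<Phi>' \<eta> * \<bar>P1 \<eta> - P2 \<eta>\<bar>))"
  have bint: "(b has_integral (G * \<omega> * W + G * M * V)) {m..l1}"
    unfolding b_def by (intro has_integral_add has_integral_mult_right K2 K3)
  have pw: "\<bar>A2 \<eta> - A1 \<eta>\<bar> \<le> b \<eta>" if e: "\<eta> \<in> {m..l1}" for \<eta>
  proof -
    define s1 where "s1 = \<Phi> l1 - \<Phi> \<eta>"
    define s2 where "s2 = \<Phi> l2 - \<Phi> \<eta>"
    have s1r: "s1 \<in> {0..T0}" unfolding s1_def using Phi_range[OF l1] e by auto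
    have s2r: "s2 \<in> {0..T0}" unfolding s2_def using Phi_range[OF l2] e le by auto
    have dE: "\<bar>E s2 - E s1\<bar> \<le> \<omega>" using om[OF s1r s2r] h0 unfolding s1_def s2_def h_def by simp
    have E1: "\<bar>E s1\<bar> \<le> M" using M s1r by auto
    have gG: "\<bar>g \<eta>\<bar> \<le> G" using G e l1 by auto
    have P20: "0 \<le> P2 \<eta>" unfolding P2_def by simp
    have ph: "0 \<le> \<Phi>' \<eta>" using Phi'_nonneg e l1 by auto
    have eq: "A2 \<eta> - A1 \<eta> = \<Phi>' \<eta> * (P2 \<eta> * (E s2 - E s1) + (P2 \<eta> - P1 \<eta>) * E s1) * g \<eta>"
      unfolding A1_def A2_def kk_def P1_def P2_def s1_def s2_def by (simp add: algebra_simps)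
    have "\<bar>P2 \<eta> * (E s2 - E s1) + (P2 \<eta> - P1 \<eta>) * E s1\<bar> \<le> P2 \<eta> * \<omega> + \<bar>P1 \<eta> - P2 \<eta>\<bar> * M"
    proof -
      have "\<bar>P2 \<eta> * (E s2 - E s1)\<bar> \<le> P2 \<eta> * \<omega>" using dE P20 by (simp add: abs_mult mult_left_mono)
      moreover have "\<bar>(P2 \<eta> - P1 \<eta>) * E s1\<bar> \<le> \<bar>P1 \<eta> - P2 \<eta>\<bar> * M"
        using E1 by (simp add: abs_mult abs_minus_commute mult_left_mono)
      ultimately show ?thesis by (smt (verit))
    qed
    hence "\<bar>A2 \<eta> - A1 \<eta>\<bar> \<le> \<Phi>' \<eta> * (P2 \<eta> * \<omega> + \<bar>P1 \<eta> - P2 \<eta>\<bar> * M) * G"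
      unfolding eq using ph gG by (simp add: abs_mult mult_mono mult_left_mono)
    also have "\<dots> = b \<eta>" unfolding b_def kk_def P2_def by (simp add: algebra_simps)
    finally show ?thesis .
  qed
  have t2: "\<bar>integral {m..l1} (\<lambda>\<eta>. A2 \<eta> - A1 \<eta>)\<bar> \<le> G * \<omega> * W + G * M * V"
  proof -
    have "norm (integral {m..l1} (\<lambda>\<eta>. A2 \<eta> - A1 \<eta>)) \<le> integral {m..l1} b"
      using pw by (intro integral_norm_bound_integral integrable_diff A2int1 A1int has_integral_integrable[OF bint]) auto
    thus ?thesis using integral_unique[OF bint] by simp
  qed
  have W0: "W \<le> T0 powr \<mu> / \<mu>"
  proof -
    have "(\<Phi> l2 - \<Phi> m) powr \<mu> \<le> T0 powr \<mu>" unfolding T0_def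
      using Phi_le[of m l2] Phi_le[of l2 n] l2 mu0 by (intro powr_mono2) auto
    hence "(\<Phi> l2 - \<Phi> m) powr \<mu> / \<mu> \<le> T0 powr \<mu> / \<mu>" using mu0 by (simp add: divide_right_mono)
    moreover have "0 \<le> h powr \<mu> / \<mu>" using mu0 by simp
    ultimately show ?thesis unfolding W_def by linarith
  qed
  have V0: "V \<le> h powr \<mu> / \<mu>"
  proof -
    have "(\<Phi> l1 - \<Phi> m) powr \<mu> \<le> (\<Phi> l2 - \<Phi> m) powr \<mu>"
      using Phi_le[of m l1] Phi_le[of l1 l2] l1 l2 le mu0 by (intro powr_mono2) auto
    hence "(\<Phi> l1 - \<Phi> m) powr \<mu> / \<mu> \<le> (\<Phi> l2 - \<Phi> m) powr \<mu> / \<mu>" using mu0 by (simp add: divide_right_mono)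
    thus ?thesis unfolding V_def W_def by linarith
  qed
  have om0: "0 \<le> \<omega>" using om[of 0 0] h0 unfolding T0_def h_def using Phi_le[of m n] mn by auto
  have "I g l2 - I g l1 = integral {l1..l2} A2 + integral {m..l1} (\<lambda>\<eta>. A2 \<eta> - A1 \<eta>)"
    using split diff by simp
  hence "\<bar>I g l2 - I g l1\<bar> \<le> (M * G) * (h powr \<mu> / \<mu>) + (G * \<omega> * W + G * M * V)"
    using t1 t2 by simp
  also have "\<dots> \<le> (M * G) * (h powr \<mu> / \<mu>) + (G * \<omega> * (T0 powr \<mu> / \<mu>) + G * M * (h powr \<mu> / \<mu>))"
    using W0 V0 G0 M0 om0 by (intro add_mono mult_left_mono order_refl) (auto)
  finally show ?thesis unfolding h_def by (simp add: algebra_simps)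
qed

end

context prob begin

lemma I_cont:
  assumes g: "continuous_on {m..n} g"
  shows "continuous_on {m..n} (I g)"
proof -
  obtain M where M0: "M > 0" and M: "\<And>s. s \<in> {0..T0} \<Longrightarrow> \<bar>E s\<bar> \<le> M" using E_bound by auto
  obtain G0 where G0: "G0 > 0" "\<forall>x\<in>g ` {m..n}. norm x \<le> G0"
    using compact_imp_bounded[OF compact_continuous_image[OF g compact_Icc]] bounded_pos by metis
  have G: "\<And>\<eta>. \<eta> \<in> {m..n} \<Longrightarrow> \<bar>g \<eta>\<bar> \<le> G0" using G0 by auto
  have T00: "0 \<le> T0" unfolding T0_def using Phi_le[of m n] mn by auto
  define C where "C = T0 powr \<mu> / \<mu>"
  have C0: "0 \<le> C" unfolding C_def using mu0 by simp
  have uc: "uniformly_continuous_on {0..T0} E"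
    by (rule compact_uniformly_continuous[OF continuous_on_subset[OF E_cont]]) auto
  show ?thesis unfolding continuous_on_iff
  proof (intro ballI allI impI)
    fix x e :: real assume x: "x \<in> {m..n}" and e: "0 < e"
    define ep where "ep = e / (2 * G0 * (C + 1))"
    have ep: "ep > 0" unfolding ep_def using e G0 C0 by auto
    obtain d1 where d1: "d1 > 0" and d1E: "\<And>s s'. s \<in> {0..T0} \<Longrightarrow> s' \<in> {0..T0} \<Longrightarrow> dist s' s < d1 \<Longrightarrow> dist (E s') (E s) < ep"
      using uc ep unfolding uniformly_continuous_on_def by metis
    define q where "q = e * \<mu> / (8 * G0 * M)"
    have q: "q > 0" unfolding q_def using e mu0 G0 M0 by auto
    define h0 where "h0 = min (d1 / 2) (q powr (1 / \<mu>))"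
    have h0: "h0 > 0" unfolding h0_def using d1 q by auto
    have key: "\<bar>I g l2 - I g l1\<bar> < e" if l1: "l1 \<in> {m..n}" and l2: "l2 \<in> {m..n}" and le: "l1 \<le> l2"
      and small: "\<Phi> l2 - \<Phi> l1 < h0" for l1 l2
    proof -
      have hh0: "0 \<le> \<Phi> l2 - \<Phi> l1" using Phi_le l1 l2 le by auto
      have "\<bar>I g l2 - I g l1\<bar> \<le> 2 * (G0 * M * ((\<Phi> l2 - \<Phi> l1) powr \<mu> / \<mu>)) + G0 * ep * (T0 powr \<mu> / \<mu>)"
      proof (rule est[OF l1 l2 le g G M])
        fix s1 s2 assume s: "s1 \<in> {0..T0}" "s2 \<in> {0..T0}" "\<bar>s2 - s1\<bar> \<le> \<Phi> l2 - \<Phi> l1"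
        have "dist s2 s1 < d1" using s small h0_def d1 by (auto simp: dist_real_def)
        thus "\<bar>E s2 - E s1\<bar> \<le> ep" using d1E[OF s(1) s(2)] by (simp add: dist_real_def)
      qed
      also have "(\<Phi> l2 - \<Phi> l1) powr \<mu> \<le> q"
      proof -
        have "(\<Phi> l2 - \<Phi> l1) powr \<mu> \<le> (q powr (1/\<mu>)) powr \<mu>"
          using hh0 small mu0 h0_def by (intro powr_mono2) auto
        also have "\<dots> = q" using q mu0 by (simp add: powr_powr)
        finally show ?thesis .
      qed
      hence "2 * (G0 * M * ((\<Phi> l2 - \<Phi> l1) powr \<mu> / \<mu>)) \<le> 2 * (G0 * M * (q / \<mu>))"
        using G0 M0 mu0 by (intro mult_left_mono divide_right_mono) auto
      also have "2 * (G0 * M * (q / \<mu>)) = e / 4" unfolding q_def using G0 M0 mu0 by (simp add: field_simps)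
      also have "G0 * ep * (T0 powr \<mu> / \<mu>) < e / 2"
      proof -
        have "G0 * ep * (T0 powr \<mu> / \<mu>) = e / 2 * (C / (C + 1))"
        proof -
          have "C + 1 \<noteq> 0" "G0 \<noteq> 0" using C0 G0 by auto
          hence "G0 * ep = e / (2 * (C + 1))" unfolding ep_def by (simp add: divide_simps)
          thus ?thesis unfolding C_def[symmetric] by simp
        qed
        also have "\<dots> < e / 2" using C0 e by (simp add: field_simps)
        finally show ?thesis .
      qed
      finally show ?thesis using e by linarith
    qed
    obtain d where d: "d > 0" and dP: "\<And>x'. x' \<in> {m..n} \<Longrightarrow> dist x' x < d \<Longrightarrow> dist (\<Phi> x') (\<Phi> x) < h0"
      using Phi_cont x h0 unfolding continuous_on_iff by metis
    show "\<exists>d>0. \<forall>x'\<in>{m..n}. dist x' x < d \<longrightarrow> dist (I g x') (I g x) < e"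
    proof (intro exI[of _ d] conjI ballI impI d)
      fix x' assume x': "x' \<in> {m..n}" "dist x' x < d"
      have P: "\<bar>\<Phi> x' - \<Phi> x\<bar> < h0" using dP[OF x'] by (simp add: dist_real_def)
      show "dist (I g x') (I g x) < e"
      proof (cases "x \<le> x'")
        case True thus ?thesis using key[OF x x'(1) True] P by (simp add: dist_real_def)
      next
        case False thus ?thesis using key[OF x'(1) x] P by (simp add: dist_real_def abs_minus_commute)
      qed
    qed
  qed
qed

end

locale full = prob +
  fixes \<sigma> L :: real and \<alpha> f :: "real \<Rightarrow> real" and Q :: "real \<Rightarrow> real \<Rightarrow> real \<Rightarrow> real"
  assumes sig: "0 < \<sigma>" and acont: "continuous_on {m - \<sigma>..m} \<alpha>"
   and fcont: "continuous_on {m..n} f" and frange: "f ` {m..n} \<subseteq> {m - \<sigma>..n}"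
   and fle: "\<And>l. l \<in> {m..n} \<Longrightarrow> f l \<le> l"
   and Qcont: "continuous_on ({m..n} \<times> UNIV) (\<lambda>(l, b, a). Q l b a)" and L0: "0 < L"
   and QL: "\<And>l a1 a2 b1 b2. l \<in> {m..n} \<Longrightarrow> \<bar>Q l b2 a2 - Q l b1 a1\<bar> \<le> L * (\<bar>b2 - b1\<bar> + \<bar>a2 - a1\<bar>)"
begin

definition "gz z = (\<lambda>\<eta>. Q \<eta> (z \<eta>) (z (f \<eta>)))"
definition "Tz z l = (if l \<le> m then \<alpha> l else \<alpha> m + I (gz z) l)"
definition "cl x = max (m - \<sigma>) (min n x)"
definition "P x = \<Phi> (max m (min n x))"

lemma gz_cont: assumes z: "continuous_on {m - \<sigma>..n} z" shows "continuous_on {m..n} (gz z)"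
proof -
  have "continuous_on {m..n} (\<lambda>\<eta>. (\<eta>, z \<eta>, z (f \<eta>)))"
  proof (intro continuous_intros)
    show "continuous_on {m..n} z" using sig by (intro continuous_on_subset[OF z]) auto
    show "continuous_on {m..n} (\<lambda>x. z (f x))"
      using continuous_on_compose2[OF z fcont frange] .
  qed
  from continuous_on_compose2[OF Qcont this] show ?thesis unfolding gz_def by auto
qed

lemma I_m: "I g m = 0" unfolding I_def by simp

lemma Tz_cont: assumes z: "continuous_on {m - \<sigma>..n} z" shows "continuous_on {m - \<sigma>..n} (Tz z)"
proof -
  have "{m - \<sigma>..n} = {m - \<sigma>..m} \<union> {m..n}" using sig mn by auto
  moreover have "continuous_on {m - \<sigma>..m} (Tz z)"
    using acont by (rule continuous_on_eq) (auto simp: Tz_def)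
  moreover have "continuous_on {m..n} (Tz z)"
  proof (rule continuous_on_eq)
    show "continuous_on {m..n} (\<lambda>l. \<alpha> m + I (gz z) l)"
      by (intro continuous_intros I_cont gz_cont z)
  qed (auto simp: Tz_def I_m)
  ultimately show ?thesis by (metis continuous_on_closed_Un closed_atLeastAtMost)
qed

lemma cl_range: "cl x \<in> {m - \<sigma>..n}" unfolding cl_def using sig mn by auto
lemma cl_id: "x \<in> {m - \<sigma>..n} \<Longrightarrow> cl x = x" unfolding cl_def by auto
lemma cl_cont: "continuous_on UNIV cl" unfolding cl_def by (intro continuous_intros)
lemma P_cont: "continuous_on UNIV P"
proof -
  have "continuous_on UNIV (\<lambda>x. max m (min n x))" by (intro continuous_intros)
  moreover have "range (\<lambda>x. max m (min n x)) \<subseteq> {m..n}" using mn by auto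
  ultimately show ?thesis unfolding P_def using continuous_on_compose2[OF Phi_cont] by blast
qed
lemma P_cl: "P (cl x) = P x" unfolding P_def cl_def using sig by (auto simp: max_def min_def)
lemma P_ge: "P x \<ge> \<Phi> m" unfolding P_def using mn by (intro Phi_le) auto
lemma P_eq: "x \<in> {m..n} \<Longrightarrow> P x = \<Phi> x" unfolding P_def by auto
lemma P_mono: "x \<le> y \<Longrightarrow> y \<in> {m..n} \<Longrightarrow> P x \<le> \<Phi> y" unfolding P_def by (intro Phi_le) auto

end

lemma powr_le_exp: fixes x b :: real assumes "0 < x" "0 < b" "b \<le> 1" shows "x powr b \<le> exp x"
proof -
  have "x powr b \<le> 1 + x"
  proof (cases "x \<le> 1")
    case True
    hence "x powr b \<le> 1 powr b" using assms by (intro powr_mono2) auto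
    thus ?thesis using assms by simp
  next
    case False
    hence "x powr b \<le> x powr 1" using assms by (intro powr_mono) auto
    thus ?thesis using assms by simp
  qed
  also have "\<dots> \<le> exp x" by (rule exp_ge_add_one_self)
  finally show ?thesis .
qed

lemma weight_bound:
  fixes s lam \<mu> :: real assumes s: "0 \<le> s" and lam: "0 < lam" and mu: "0 < \<mu>" "\<mu> \<le> 1"
  shows "s powr (\<mu> - 1) * exp (- (lam * s)) \<le> lam powr (- (\<mu> / 2)) * s powr (\<mu> / 2 - 1)"
proof (cases "s = 0")
  case False
  hence s0: "s > 0" using s by simp
  have "(lam * s) powr (\<mu> / 2) \<le> exp (lam * s)" using s0 lam mu by (intro powr_le_exp) auto
  hence "lam powr (\<mu>/2) * s powr (\<mu>/2) \<le> exp (lam * s)" using s0 lam by (simp add: powr_mult)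
  hence "s powr (\<mu>/2) * exp (- (lam * s)) \<le> lam powr (- (\<mu> / 2))"
    using lam by (simp add: powr_minus exp_minus field_simps)
  hence "s powr (\<mu>/2 - 1) * (s powr (\<mu>/2) * exp (- (lam * s))) \<le> s powr (\<mu>/2 - 1) * lam powr (- (\<mu> / 2))"
    by (intro mult_left_mono) auto
  moreover have "s powr (\<mu> - 1) = s powr (\<mu>/2 - 1) * s powr (\<mu>/2)" using s0 by (simp add: powr_add[symmetric])
  ultimately show ?thesis by (simp add: mult.commute mult.left_commute)
qed simp

context full begin

lemma contr:
  assumes lam: "lam > 0" and M0: "M \<ge> 0" and M: "\<And>s. s \<in> {0..T0} \<Longrightarrow> \<bar>E s\<bar> \<le> M" and d: "d \<ge> 0"
    and z1: "continuous_on {m - \<sigma>..n} z1" and z2: "continuous_on {m - \<sigma>..n} z2"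
    and zb: "\<And>t. t \<in> {m - \<sigma>..n} \<Longrightarrow> \<bar>z1 t - z2 t\<bar> \<le> exp (lam * P t) * d"
    and l: "l \<in> {m..n}"
  shows "exp (- (lam * \<Phi> l)) * \<bar>Tz z1 l - Tz z2 l\<bar>
          \<le> 2 * L * M * d * lam powr (- (\<mu> / 2)) * (T0 powr (\<mu> / 2) / (\<mu> / 2))"
proof (cases "l \<le> m")
  case True
  have "0 \<le> 2 * L * M * d * lam powr (- (\<mu> / 2)) * (T0 powr (\<mu> / 2) / (\<mu> / 2))"
    using L0 M0 d mu0 by (intro mult_nonneg_nonneg divide_nonneg_pos) auto
  thus ?thesis using True by (simp add: Tz_def)
next
  case False
  define \<beta> where "\<beta> = \<mu> / 2"
  have b0: "\<beta> > 0" unfolding \<beta>_def using mu0 by simp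
  define g1 where "g1 = gz z1"
  define g2 where "g2 = gz z2"
  have ml: "m \<in> {m..l}" using l by auto
  have g1c: "continuous_on {m..l} g1" unfolding g1_def using l by (intro continuous_on_subset[OF gz_cont[OF z1]]) auto
  have g2c: "continuous_on {m..l} g2" unfolding g2_def using l by (intro continuous_on_subset[OF gz_cont[OF z2]]) auto
  have i1: "(\<lambda>\<eta>. kk l \<eta> * E (\<Phi> l - \<Phi> \<eta>) * g1 \<eta>) integrable_on {m..l}"
    using prod_int_E[OF l ml g1c] by (simp add: absolutely_integrable_on_def)
  have i2: "(\<lambda>\<eta>. kk l \<eta> * E (\<Phi> l - \<Phi> \<eta>) * g2 \<eta>) integrable_on {m..l}"
    using prod_int_E[OF l ml g2c] by (simp add: absolutely_integrable_on_def)
  have eq: "Tz z1 l - Tz z2 l = integral {m..l} (\<lambda>\<eta>. kk l \<eta> * E (\<Phi> l - \<Phi> \<eta>) * (g1 \<eta> - g2 \<eta>))"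
    using False integral_diff[OF i1 i2] unfolding Tz_def I_def g1_def g2_def by (simp add: algebra_simps)
  define C where "C = 2 * L * M * d * exp (lam * \<Phi> l) * lam powr (- \<beta>)"
  have C0: "C \<ge> 0" unfolding C_def using L0 M0 d by simp
  define b where "b = (\<lambda>\<eta>. C * (\<Phi>' \<eta> * (\<Phi> l - \<Phi> \<eta>) powr (\<beta> - 1)))"
  have bint: "(b has_integral C * ((\<Phi> l - \<Phi> m) powr \<beta> / \<beta>)) {m..l}"
    unfolding b_def by (intro has_integral_mult_right kern_int[OF b0 l ml])
  have pw: "\<bar>kk l \<eta> * E (\<Phi> l - \<Phi> \<eta>) * (g1 \<eta> - g2 \<eta>)\<bar> \<le> b \<eta>" if e: "\<eta> \<in> {m..l}" for \<eta>
  proof -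
    have en: "\<eta> \<in> {m..n}" using e l by auto
    have fe: "f \<eta> \<in> {m - \<sigma>..n}" using frange en by blast
    have en': "\<eta> \<in> {m - \<sigma>..n}" using en sig by auto
    have "\<bar>g1 \<eta> - g2 \<eta>\<bar> \<le> L * (\<bar>z1 \<eta> - z2 \<eta>\<bar> + \<bar>z1 (f \<eta>) - z2 (f \<eta>)\<bar>)"
      unfolding g1_def g2_def gz_def using QL[OF en] by (simp add: abs_minus_commute)
    also have "\<dots> \<le> L * (exp (lam * \<Phi> \<eta>) * d + exp (lam * \<Phi> \<eta>) * d)"
    proof -
      have "\<bar>z1 \<eta> - z2 \<eta>\<bar> \<le> exp (lam * \<Phi> \<eta>) * d" using zb[OF en'] P_eq[OF en] by simp
      moreover have "\<bar>z1 (f \<eta>) - z2 (f \<eta>)\<bar> \<le> exp (lam * \<Phi> \<eta>) * d"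
      proof -
        have "P (f \<eta>) \<le> \<Phi> \<eta>" using P_mono[OF fle[OF en] en] .
        hence "exp (lam * P (f \<eta>)) \<le> exp (lam * \<Phi> \<eta>)" using lam by simp
        thus ?thesis using zb[OF fe] d by (meson mult_right_mono order_trans)
      qed
      ultimately show ?thesis using L0 by (intro mult_left_mono add_mono) auto
    qed
    finally have gd: "\<bar>g1 \<eta> - g2 \<eta>\<bar> \<le> 2 * L * d * exp (lam * \<Phi> \<eta>)" by simp
    have Es: "\<bar>E (\<Phi> l - \<Phi> \<eta>)\<bar> \<le> M" using M Phi_range[OF l e] by auto
    have kk0: "0 \<le> kk l \<eta>" using kk_nonneg[OF l e] .
    have "\<bar>kk l \<eta> * E (\<Phi> l - \<Phi> \<eta>) * (g1 \<eta> - g2 \<eta>)\<bar> \<le> kk l \<eta> * M * (2 * L * d * exp (lam * \<Phi> \<eta>))"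
      using kk0 Es gd M0 by (simp add: abs_mult mult_mono mult_left_mono)
    also have "\<dots> = 2 * L * M * d * exp (lam * \<Phi> l) * (\<Phi>' \<eta> * ((\<Phi> l - \<Phi> \<eta>) powr (\<mu> - 1) * exp (- (lam * (\<Phi> l - \<Phi> \<eta>)))))"
      unfolding kk_def by (simp add: algebra_simps exp_diff exp_minus field_simps flip: exp_add)
    also have "\<dots> \<le> 2 * L * M * d * exp (lam * \<Phi> l) * (\<Phi>' \<eta> * (lam powr (- (\<mu> / 2)) * (\<Phi> l - \<Phi> \<eta>) powr (\<mu> / 2 - 1)))"
    proof -
      have s0: "0 \<le> \<Phi> l - \<Phi> \<eta>" using Phi_range[OF l e] by auto
      have "0 \<le> 2 * L * M * d * exp (lam * \<Phi> l)" using L0 M0 d by simp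
      moreover have "0 \<le> \<Phi>' \<eta>" using Phi'_nonneg[OF en] .
      ultimately show ?thesis using weight_bound[OF s0 lam mu0 mu1] by (intro mult_left_mono) auto
    qed
    also have "\<dots> = b \<eta>" unfolding b_def C_def \<beta>_def by (simp add: algebra_simps)
    finally show ?thesis .
  qed
  have intd: "(\<lambda>\<eta>. kk l \<eta> * E (\<Phi> l - \<Phi> \<eta>) * (g1 \<eta> - g2 \<eta>)) integrable_on {m..l}"
    using integrable_diff[OF i1 i2] by (simp add: right_diff_distrib)
  have "norm (integral {m..l} (\<lambda>\<eta>. kk l \<eta> * E (\<Phi> l - \<Phi> \<eta>) * (g1 \<eta> - g2 \<eta>))) \<le> integral {m..l} b"
    by (rule integral_norm_bound_integral[OF intd has_integral_integrable[OF bint]]) (use pw in auto)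
  hence "\<bar>Tz z1 l - Tz z2 l\<bar> \<le> integral {m..l} b" unfolding eq by simp
  also have "\<dots> = C * ((\<Phi> l - \<Phi> m) powr \<beta> / \<beta>)" using integral_unique[OF bint] .
  also have "\<dots> \<le> C * (T0 powr \<beta> / \<beta>)"
  proof -
    have "(\<Phi> l - \<Phi> m) powr \<beta> \<le> T0 powr \<beta>" unfolding T0_def
      using Phi_le[of m l] Phi_le[of l n] l b0 by (intro powr_mono2) auto
    thus ?thesis using C0 b0 by (intro mult_left_mono divide_right_mono) auto
  qed
  finally have "exp (- (lam * \<Phi> l)) * \<bar>Tz z1 l - Tz z2 l\<bar> \<le> exp (- (lam * \<Phi> l)) * (C * (T0 powr \<beta> / \<beta>))"
    by (intro mult_left_mono) auto
  also have "\<dots> = 2 * L * M * d * lam powr (- (\<mu> / 2)) * (T0 powr (\<mu> / 2) / (\<mu> / 2))"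
    unfolding C_def \<beta>_def by (simp add: exp_minus field_simps)
  finally show ?thesis .
qed

end

context full begin

definition "sol z \<longleftrightarrow> continuous_on {m - \<sigma>..n} z \<and> (\<forall>l\<in>{m - \<sigma>..m}. z l = \<alpha> l) \<and>
   (\<forall>l\<in>{m..n}. ((\<lambda>\<eta>. kk l \<eta> * E (\<Phi> l - \<Phi> \<eta>) * gz z \<eta>) has_integral (z l - \<alpha> m)) {m..l})"

lemma Tz_cong: assumes "\<And>t. t \<in> {m - \<sigma>..n} \<Longrightarrow> z1 t = z2 t" and l: "l \<in> {m - \<sigma>..n}"
  shows "Tz z1 l = Tz z2 l"
proof -
  have "gz z1 \<eta> = gz z2 \<eta>" if "\<eta> \<in> {m..l}" for \<eta>
  proof -
    have "\<eta> \<in> {m..n}" using that l by auto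
    hence "f \<eta> \<in> {m - \<sigma>..n}" using frange by blast
    moreover have "\<eta> \<in> {m - \<sigma>..n}" using \<open>\<eta> \<in> {m..n}\<close> sig by auto
    ultimately show ?thesis unfolding gz_def using assms by simp
  qed
  hence "I (gz z1) l = I (gz z2) l" unfolding I_def by (intro integral_cong) auto
  thus ?thesis unfolding Tz_def by simp
qed

lemma sol_fix: assumes "sol w" "t \<in> {m - \<sigma>..n}" shows "Tz w t = w t"
proof (cases "t \<le> m")
  case True thus ?thesis using assms unfolding sol_def Tz_def by auto
next
  case False
  hence t: "t \<in> {m..n}" using assms by auto
  have "I (gz w) t = w t - \<alpha> m" unfolding I_def using assms t unfolding sol_def
    by (intro integral_unique) auto
  thus ?thesis using False unfolding Tz_def by simp
qed

lemma wbc: assumes v: "continuous_on {m - \<sigma>..n} v" and lam: "lam \<ge> 0"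
  shows "(\<lambda>x. exp (- (lam * P x)) * v (cl x)) \<in> bcontfun"
proof -
  obtain B where B: "\<forall>x\<in>v ` {m - \<sigma>..n}. norm x \<le> B"
    using compact_imp_bounded[OF compact_continuous_image[OF v compact_Icc]] bounded_pos by metis
show ?thesis
proof (rule bcontfun_normI)
  have "continuous_on UNIV (\<lambda>x. v (cl x))"
  proof -
    have "range cl \<subseteq> {m - \<sigma>..n}" using cl_range by blast
    from continuous_on_compose2[OF v cl_cont this] show ?thesis .
  qed
  thus "continuous_on UNIV (\<lambda>x. exp (- (lam * P x)) * v (cl x))"
    by (intro continuous_intros P_cont)
  fix x
  have "\<bar>v (cl x)\<bar> \<le> \<bar>B\<bar>" using B cl_range[of x] by force
  hence "norm (exp (- (lam * P x)) * v (cl x)) \<le> exp (- (lam * P x)) * \<bar>B\<bar>"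
    by (auto simp: abs_mult intro!: mult_left_mono)
  also have "\<dots> \<le> exp (- (lam * \<Phi> m)) * \<bar>B\<bar>"
    using P_ge[of x] lam by (intro mult_right_mono) (auto intro: mult_left_mono)
  finally show "norm (exp (- (lam * P x)) * v (cl x)) \<le> exp (- (lam * \<Phi> m)) * \<bar>B\<bar>" .
qed
qed

end

context full begin

theorem exists_unique_sol: "\<exists>z. sol z \<and> (\<forall>w. sol w \<longrightarrow> (\<forall>x\<in>{m - \<sigma>..n}. w x = z x))"
proof -
  obtain M where M0: "M > 0" and M: "\<And>s. s \<in> {0..T0} \<Longrightarrow> \<bar>E s\<bar> \<le> M" using E_bound by auto
  define K0 where "K0 = 2 * L * M * (T0 powr (\<mu> / 2) / (\<mu> / 2))"
  have K00: "K0 \<ge> 0" unfolding K0_def using L0 M0 mu0 by simp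
  define lam where "lam = (2 * K0 + 1) powr (2 / \<mu>)"
  have lam: "lam > 0" unfolding lam_def using K00 by (intro powr_gt_zero[THEN iffD2]) auto
  have lamp: "lam powr (- (\<mu> / 2)) = 1 / (2 * K0 + 1)"
  proof -
    have e: "2 / \<mu> * (\<mu> / 2) = 1" using mu0 by simp
    have "((2 * K0 + 1) powr (2 / \<mu>)) powr (\<mu> / 2) = (2 * K0 + 1) powr (2 / \<mu> * (\<mu> / 2))" by (rule powr_powr)
    also have "\<dots> = 2 * K0 + 1" unfolding e using K00 by simp
    finally have a: "lam powr (\<mu> / 2) = 2 * K0 + 1" unfolding lam_def .
    show ?thesis unfolding powr_minus a by (simp add: inverse_eq_divide)
  qed
  define zy where "zy = (\<lambda>(y :: real \<Rightarrow>\<^sub>C real) x. exp (lam * P x) * y (cl x))"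
  have zyc: "continuous_on UNIV (zy y)" for y
  proof -
    have "continuous_on UNIV (\<lambda>x. y (cl x))"
      using continuous_on_compose2[OF continuous_on_apply_bcontfun[of UNIV y] cl_cont] by auto
    thus ?thesis unfolding zy_def by (intro continuous_intros P_cont)
  qed
  hence zyc': "continuous_on {m - \<sigma>..n} (zy y)" for y by (rule continuous_on_subset) auto
  define Fy where "Fy = (\<lambda>y x. exp (- (lam * P x)) * Tz (zy y) (cl x))"
  have Fyb: "Fy y \<in> bcontfun" for y unfolding Fy_def using lam by (intro wbc Tz_cont zyc') auto
  define Gop where "Gop = (\<lambda>y. Bcontfun (Fy y))"
  have Gop_ap: "apply_bcontfun (Gop y) x = Fy y x" for y x
    unfolding Gop_def using Fyb by (simp add: Bcontfun_inverse)
  have lip: "dist (Gop y1) (Gop y2) \<le> 1/2 * dist y1 y2" for y1 y2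
  proof (rule dist_bound)
    fix x
    define d where "d = dist y1 y2"
    have d0: "d \<ge> 0" unfolding d_def by simp
    define t where "t = cl x"
    have t: "t \<in> {m - \<sigma>..n}" unfolding t_def by (rule cl_range)
    show "dist (Gop y1 x) (Gop y2 x) \<le> 1/2 * dist y1 y2"
    proof (cases "t \<le> m")
      case True
      thus ?thesis unfolding Gop_ap Fy_def t_def[symmetric] by (simp add: Tz_def)
    next
      case False
      hence tl: "t \<in> {m..n}" using t by auto
      have Px: "P x = \<Phi> t" using P_cl[of x] P_eq[OF tl] unfolding t_def by simp
      have zb: "\<bar>zy y1 s - zy y2 s\<bar> \<le> exp (lam * P s) * d" for s
      proof -
        have "\<bar>zy y1 s - zy y2 s\<bar> = exp (lam * P s) * \<bar>y1 (cl s) - y2 (cl s)\<bar>"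
          unfolding zy_def by (simp add: abs_mult right_diff_distrib[symmetric])
        also have "\<dots> \<le> exp (lam * P s) * d"
          using dist_bounded[of y1 "cl s" y2] unfolding d_def dist_real_def by (intro mult_left_mono) auto
        finally show ?thesis .
      qed
      have "exp (- (lam * \<Phi> t)) * \<bar>Tz (zy y1) t - Tz (zy y2) t\<bar>
          \<le> 2 * L * M * d * lam powr (- (\<mu> / 2)) * (T0 powr (\<mu> / 2) / (\<mu> / 2))"
        by (rule contr[OF lam less_imp_le[OF M0] M d0 zyc' zyc' zb tl])
      also have "\<dots> = d * (K0 / (2 * K0 + 1))" unfolding lamp K0_def by (simp add: field_simps)
      also have "\<dots> \<le> d * (1/2)" using K00 d0 by (intro mult_left_mono) (auto simp: field_simps)
      finally show ?thesis unfolding Gop_ap Fy_def t_def[symmetric] Px dist_real_def d_def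
        by (simp add: abs_mult right_diff_distrib[symmetric] mult.commute)
    qed
  qed
  have "\<exists>!y. Gop y = y"
    by (rule banach_fix_type[of "1/2"]) (use lip in auto)
  then obtain ys where ys: "Gop ys = ys" and ysu: "\<And>y. Gop y = y \<Longrightarrow> y = ys"
    by metis
  define z where "z = zy ys"
  have zfix: "z t = Tz z t" if t: "t \<in> {m - \<sigma>..n}" for t
  proof -
    have "ys (cl t) = Gop ys (cl t)" using ys by simp
    also have "\<dots> = exp (- (lam * P t)) * Tz z t"
      unfolding Gop_ap Fy_def z_def using cl_id[OF t] P_cl[of t] by simp
    finally show ?thesis unfolding z_def zy_def by (simp add: exp_minus field_simps)
  qed
  have solz: "sol z"
    unfolding sol_def
  proof (intro conjI ballI)
    show "continuous_on {m - \<sigma>..n} z" unfolding z_def by (rule zyc')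
    fix l
    { assume l: "l \<in> {m - \<sigma>..m}"
      thus "z l = \<alpha> l" using zfix[of l] mn by (auto simp: Tz_def) }
    { assume l: "l \<in> {m..n}"
      have ml: "m \<in> {m..l}" using l by auto
      have "continuous_on {m..l} (gz z)" using l by (intro continuous_on_subset[OF gz_cont[OF zyc'[of ys, folded z_def]]]) auto
      from prod_int_E[OF l ml this]
      have "((\<lambda>\<eta>. kk l \<eta> * E (\<Phi> l - \<Phi> \<eta>) * gz z \<eta>) has_integral I (gz z) l) {m..l}"
        unfolding I_def by (auto simp: absolutely_integrable_on_def)
      moreover have "I (gz z) l = z l - \<alpha> m"
      proof (cases "l \<le> m")
        case True hence "l = m" using l by auto
        thus ?thesis using zfix[of m] mn sig by (simp add: I_m Tz_def)
      next
        case False thus ?thesis using zfix[of l] l sig by (simp add: Tz_def)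
      qed
      ultimately show "((\<lambda>\<eta>. kk l \<eta> * E (\<Phi> l - \<Phi> \<eta>) * gz z \<eta>) has_integral (z l - \<alpha> m)) {m..l}" by simp }
  qed
  have uniq: "\<forall>x\<in>{m - \<sigma>..n}. w x = z x" if w: "sol w" for w
  proof -
    have wc: "continuous_on {m - \<sigma>..n} w" using w unfolding sol_def by simp
    define yw where "yw = Bcontfun (\<lambda>x. exp (- (lam * P x)) * w (cl x))"
    have ywb: "(\<lambda>x. exp (- (lam * P x)) * w (cl x)) \<in> bcontfun" using wc lam by (intro wbc) auto
    have yw_ap: "apply_bcontfun yw x = exp (- (lam * P x)) * w (cl x)" for x
      unfolding yw_def using ywb by (simp add: Bcontfun_inverse)
    have zyw: "zy yw x = w (cl x)" for x
      unfolding zy_def yw_ap using P_cl[of x] cl_id[OF cl_range[of x]] by (simp add: exp_minus field_simps)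
    have "Gop yw = yw"
    proof (rule bcontfun_eqI)
      fix x
      have "Tz (zy yw) (cl x) = Tz w (cl x)"
        by (rule Tz_cong[OF _ cl_range]) (simp add: zyw cl_id)
      also have "\<dots> = w (cl x)" by (rule sol_fix[OF w cl_range])
      finally show "Gop yw x = yw x" unfolding Gop_ap Fy_def yw_ap by simp
    qed
    hence "yw = ys" by (rule ysu)
    show ?thesis
    proof
      fix x assume x: "x \<in> {m - \<sigma>..n}"
      have "w x = zy yw x" using zyw cl_id[OF x] by simp
      thus "w x = z x" unfolding z_def \<open>yw = ys\<close> .
    qed
  qed
  show ?thesis using solz uniq by blast
qed

end

theorem mainTheorem2:
  fixes m n \<sigma> \<rho> \<kappa> \<mu> L :: real
    and \<Phi> \<Phi>' \<alpha> f :: "real \<Rightarrow> real"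
    and Q :: "real \<Rightarrow> real \<Rightarrow> real \<Rightarrow> real"
  assumes "0 < m" "m < n" "0 < \<sigma>" "0 < \<rho>" "0 < \<kappa>" "\<kappa> < \<mu>" "\<mu> \<le> 1"
    and "mono_on {m..n} \<Phi>"
    and "\<And>l. l \<in> {m..n} \<Longrightarrow> (\<Phi> has_real_derivative \<Phi>' l) (at l within {m..n})"
    and "\<And>l. l \<in> {m..n} \<Longrightarrow> \<Phi>' l \<noteq> 0"
    and "continuous_on {m - \<sigma>..m} \<alpha>"
    and H1: "continuous_on {m..n} f" "f ` {m..n} \<subseteq> {m - \<sigma>..n}" "\<And>l. l \<in> {m..n} \<Longrightarrow> f l \<le> l"
    and H2: "continuous_on ({m..n} \<times> UNIV) (\<lambda>(l, b, a). Q l b a)"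
      "0 < L"
      "\<And>l a1 a2 b1 b2. l \<in> {m..n} \<Longrightarrow>
         \<bar>Q l b2 a2 - Q l b1 a1\<bar> \<le> L * (\<bar>b2 - b1\<bar> + \<bar>a2 - a1\<bar>)"
  shows "\<exists>z. is_solution m n \<sigma> \<mu> \<kappa> \<rho> \<Phi> \<Phi>' \<alpha> f Q z \<and>
           (\<forall>w. is_solution m n \<sigma> \<mu> \<kappa> \<rho> \<Phi> \<Phi>' \<alpha> f Q w \<longrightarrow>
                 (\<forall>x\<in>{m - \<sigma>..n}. w x = z x))"
proof -
  interpret full m n \<Phi> \<Phi>' \<mu> \<kappa> \<rho> \<sigma> L \<alpha> f Q
    by unfold_locales (use assms in auto)
  have eq: "is_solution m n \<sigma> \<mu> \<kappa> \<rho> \<Phi> \<Phi>' \<alpha> f Q z \<longleftrightarrow> sol z" for z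
  proof -
    have "continuous_on {m - \<sigma>..n} z \<Longrightarrow> continuous_on {m..n} z"
      using sig by (rule_tac continuous_on_subset) auto
    thus ?thesis unfolding is_solution_def sol_def kk_def E_def gz_def by blast
  qed
  show ?thesis using exists_unique_sol unfolding eq .
qed

end
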